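(* For any integer $t\geq 4$, there exist a connected graph $G$ and a function $g:V(G_1)\to V(G_2)$ such that $Dist(G)+Dist(F_G)=t$.
   Context: $Dist(H)$ is the least $t$ such that $H$ has a labeling $V(H)\to\{1,\dots,t\}$ preserved by no non-identity automorphism of $H$. Functigraph: for disjoint copies $G_1,G_2$ of a connected graph $G$ and a function $g:V(G_1)\to V(G_2)$, $F_G$ has vertex set $V(G_1)\cup V(G_2)$ and edge set $E(G_1)\cup E(G_2)\cup\{uv: u\in V(G_1),\ g(u)=v\}$. *)

theory Defs
  imports Main "HOL-Library.FuncSet"
begin

definition graph :: "'a set \<Rightarrow> ('a \<Rightarrow> 'a \<Rightarrow> bool) \<Rightarrow> bool" where
  "graph V E \<longleftrightarrow> finite V \<and> (\<forall>u v. E u v \<longrightarrow> u \<in> V \<and> v \<in> V)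
     \<and> (\<forall>u v. E u v \<longrightarrow> E v u) \<and> (\<forall>u. \<not> E u u)"

definition connected_graph :: "'a set \<Rightarrow> ('a \<Rightarrow> 'a \<Rightarrow> bool) \<Rightarrow> bool" where
  "connected_graph V E \<longleftrightarrow> graph V E \<and> V \<noteq> {} \<and> (\<forall>u\<in>V. \<forall>v\<in>V. E\<^sup>*\<^sup>* u v)"

definition automorphism :: "'a set \<Rightarrow> ('a \<Rightarrow> 'a \<Rightarrow> bool) \<Rightarrow> ('a \<Rightarrow> 'a) \<Rightarrow> bool" where
  "automorphism V E \<sigma> \<longleftrightarrow> bij_betw \<sigma> V V \<and> (\<forall>u\<in>V. \<forall>v\<in>V. E u v \<longleftrightarrow> E (\<sigma> u) (\<sigma> v))"

definition distinguishing :: "'a set \<Rightarrow> ('a \<Rightarrow> 'a \<Rightarrow> bool) \<Rightarrow> ('a \<Rightarrow> nat) \<Rightarrow> bool" where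
  "distinguishing V E c \<longleftrightarrow>
     (\<forall>\<sigma>. automorphism V E \<sigma> \<and> (\<forall>v\<in>V. c (\<sigma> v) = c v) \<longrightarrow> (\<forall>v\<in>V. \<sigma> v = v))"

definition Dist :: "'a set \<Rightarrow> ('a \<Rightarrow> 'a \<Rightarrow> bool) \<Rightarrow> nat" where
  "Dist V E = (LEAST t. \<exists>c. (\<forall>v\<in>V. c v \<in> {1..t}) \<and> distinguishing V E c)"

text \<open>Functigraph: G_1 = Inl-copy, G_2 = Inr-copy, g maps V(G_1) to V(G_2)
  (represented as a function V \<Rightarrow> V, Inl u joined to Inr (g u)).\<close>
definition fg_V :: "'a set \<Rightarrow> ('a + 'a) set" where
  "fg_V V = Inl ` V \<union> Inr ` V"

fun fg_E :: "'a set \<Rightarrow> ('a \<Rightarrow> 'a \<Rightarrow> bool) \<Rightarrow> ('a \<Rightarrow> 'a) \<Rightarrow> ('a + 'a) \<Rightarrow> ('a + 'a) \<Rightarrow> bool" where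
  "fg_E V E g (Inl a) (Inl b) = E a b"
| "fg_E V E g (Inr a) (Inr b) = E a b"
| "fg_E V E g (Inl a) (Inr b) = (a \<in> V \<and> b \<in> V \<and> g a = b)"
| "fg_E V E g (Inr a) (Inl b) = (a \<in> V \<and> b \<in> V \<and> g b = a)"

end

theory Submission
  imports Defs
begin

definition sw :: "'b \<Rightarrow> 'b \<Rightarrow> 'b \<Rightarrow> 'b" where
  "sw u v x = (if x = u then v else if x = v then u else x)"

lemma sw_aut:
  assumes sym: "\<forall>x y. E x y \<longrightarrow> E y x" and irr: "\<forall>x. \<not> E x x"
    and uv: "u \<in> V" "v \<in> V"
    and tw: "\<forall>w\<in>V. w \<noteq> u \<longrightarrow> w \<noteq> v \<longrightarrow> (E u w \<longleftrightarrow> E v w)"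
  shows "automorphism V E (sw u v)"
  unfolding automorphism_def
proof
  show "bij_betw (sw u v) V V"
    by (rule bij_betw_byWitness[where f' = "sw u v"]) (auto simp: sw_def uv)
  show "\<forall>x\<in>V. \<forall>y\<in>V. E x y = E (sw u v x) (sw u v y)"
  proof (intro ballI)
    fix x y assume x: "x \<in> V" and y: "y \<in> V"
    have t1: "E u w = E v w" if "w \<in> V" "w \<noteq> u" "w \<noteq> v" for w using tw that by blast
    have t2: "E w u = E w v" if "w \<in> V" "w \<noteq> u" "w \<noteq> v" for w using t1[OF that] sym by blast
    have s: "E u v = E v u" using sym by blast
    have irr': "\<And>z. \<not> E z z" using irr by blast
    have su: "sw u v u = v" and sv: "sw u v v = u" by (auto simp: sw_def)
    have so: "sw u v z = z" if "z \<noteq> u" "z \<noteq> v" for z using that by (simp add: sw_def)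
    show "E x y = E (sw u v x) (sw u v y)"
    proof (cases "x = u \<or> x = v")
      case True
      then show ?thesis
      proof
        assume xu: "x = u"
        show ?thesis
        proof (cases "y = u \<or> y = v")
          case True then show ?thesis using xu s irr' su sv by metis
        next
          case False then show ?thesis using xu t1[OF y] su so[of y] by metis
        qed
      next
        assume xv: "x = v"
        show ?thesis
        proof (cases "y = u \<or> y = v")
          case True then show ?thesis using xv s irr' su sv by metis
        next
          case False then show ?thesis using xv t1[OF y] sv so[of y] by metis
        qed
      qed
    next
      case False
      show ?thesis
      proof (cases "y = u \<or> y = v")
        case True then show ?thesis using False t2[OF x] su sv so[of x] by metis
      next
        case F2: False then show ?thesis using False so[of x] so[of y] by metis
      qed
    qed
  qed
qed

lemma twin_not_dist:
  assumes sym: "\<forall>x y. E x y \<longrightarrow> E y x" and irr: "\<forall>x. \<not> E x x"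
    and S: "S \<subseteq> V" "finite S"
    and tw: "\<forall>u\<in>S. \<forall>v\<in>S. u \<noteq> v \<longrightarrow> (\<forall>w\<in>V. w \<noteq> u \<longrightarrow> w \<noteq> v \<longrightarrow> (E u w \<longleftrightarrow> E v w))"
    and lt: "t < card S" and c: "\<forall>v\<in>V. c v \<in> {1..t}"
  shows "\<not> distinguishing V E c"
proof
  assume d: "distinguishing V E c"
  have "\<not> inj_on c S"
  proof
    assume "inj_on c S"
    then have "card (c ` S) = card S" by (rule card_image)
    moreover have "c ` S \<subseteq> {1..t}" using c S by auto
    hence "card (c ` S) \<le> t" using card_mono[of "{1..t}"] by fastforce
    ultimately show False using lt by simp
  qed
  then obtain u v where uv: "u\<in>S" "v\<in>S" "u\<noteq>v" "c u = c v" unfolding inj_on_def by blast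
  have aut: "automorphism V E (sw u v)"
  proof (rule sw_aut[OF sym irr])
    show "u \<in> V" "v \<in> V" using uv S by blast+
    show "\<forall>w\<in>V. w \<noteq> u \<longrightarrow> w \<noteq> v \<longrightarrow> (E u w \<longleftrightarrow> E v w)"
      using tw uv(1,2,3) by blast
  qed
  have "\<forall>x\<in>V. c (sw u v x) = c x" unfolding sw_def using uv(4) by simp
  then have "\<forall>x\<in>V. sw u v x = x" using d aut unfolding distinguishing_def by blast
  moreover have "sw u v u = v" by (simp add: sw_def)
  ultimately show False using uv S by (metis subsetD)
qed

lemma Dist_eqI:
  assumes "\<exists>c. (\<forall>v\<in>V. c v \<in> {1..m}) \<and> distinguishing V E c"
    and "\<And>t c. t < m \<Longrightarrow> \<forall>v\<in>V. c v \<in> {1..t} \<Longrightarrow> \<not> distinguishing V E c"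
  shows "Dist V E = m"
  unfolding Dist_def
proof (rule Least_equality)
  show "\<exists>c. (\<forall>v\<in>V. c v \<in> {1..m}) \<and> distinguishing V E c" by fact
  fix y assume "\<exists>c. (\<forall>v\<in>V. c v \<in> {1..y}) \<and> distinguishing V E c"
  then show "m \<le> y" using assms(2) not_less by blast
qed

lemma aut_deg:
  assumes a: "automorphism V E \<sigma>" and v: "v \<in> V"
  shows "card {w\<in>V. E (\<sigma> v) w} = card {w\<in>V. E v w}"
proof -
  have b: "bij_betw \<sigma> V V" and e: "\<forall>u\<in>V. \<forall>v\<in>V. E u v \<longleftrightarrow> E (\<sigma> u) (\<sigma> v)"
    using a unfolding automorphism_def by auto
  have "{w\<in>V. E (\<sigma> v) w} = \<sigma> ` {w\<in>V. E v w}"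
  proof
    show "\<sigma> ` {w\<in>V. E v w} \<subseteq> {w\<in>V. E (\<sigma> v) w}"
    proof
      fix y assume "y \<in> \<sigma> ` {w\<in>V. E v w}"
      then obtain w where w: "w \<in> V" "E v w" "y = \<sigma> w" by blast
      have "\<sigma> w \<in> V" using b w(1) by (auto simp: bij_betw_def)
      moreover have "E (\<sigma> v) (\<sigma> w)" using e v w(1,2) by blast
      ultimately show "y \<in> {w\<in>V. E (\<sigma> v) w}" using w(3) by blast
    qed
    show "{w\<in>V. E (\<sigma> v) w} \<subseteq> \<sigma> ` {w\<in>V. E v w}"
    proof
      fix w assume w: "w \<in> {w\<in>V. E (\<sigma> v) w}"
      then obtain w' where "w' \<in> V" "w = \<sigma> w'" using b by (auto simp: bij_betw_def)
      moreover have "E v w'" using e v \<open>w' \<in> V\<close> w \<open>w = \<sigma> w'\<close> by blast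
      ultimately show "w \<in> \<sigma> ` {w\<in>V. E v w}" by blast
    qed
  qed
  moreover have "inj_on \<sigma> {w\<in>V. E v w}"
    using b by (auto simp: bij_betw_def intro: inj_on_subset)
  ultimately show ?thesis by (simp add: card_image)
qed

definition KE :: "nat \<Rightarrow> nat \<Rightarrow> nat \<Rightarrow> bool" where
  "KE n a b = (a \<noteq> b \<and> a < n \<and> b < n)"

lemma fg_sym: "fg_E {0..<n} (KE n) g x y \<Longrightarrow> fg_E {0..<n} (KE n) g y x"
  by (cases x; cases y) (auto simp: KE_def)

lemma fg_irr: "\<not> fg_E {0..<n} (KE n) g x x"
  by (cases x) (auto simp: KE_def)

lemma deg_Inl:
  assumes "i < n" "g \<in> {0..<n} \<rightarrow> {0..<n}"
  shows "card {w \<in> fg_V {0..<n}. fg_E {0..<n} (KE n) g (Inl i) w} = n"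
proof -
  have "{w \<in> fg_V {0..<n}. fg_E {0..<n} (KE n) g (Inl i) w}
      = Inr ` {g i} \<union> Inl ` ({0..<n} - {i})" (is "?L = ?R")
  proof (rule set_eqI)
    fix w show "w \<in> ?L \<longleftrightarrow> w \<in> ?R" using assms by (cases w) (auto simp: fg_V_def KE_def)
  qed
  moreover have "card (Inr ` {g i} \<union> Inl ` ({0..<n} - {i})) = 1 + (n - 1)"
    by (subst card_Un_disjoint) (use assms in \<open>auto simp: card_image\<close>)
  ultimately show ?thesis using assms by simp
qed

lemma deg_Inr:
  assumes "j < n"
  shows "card {w \<in> fg_V {0..<n}. fg_E {0..<n} (KE n) g (Inr j) w}
     = (n - 1) + card {i\<in>{0..<n}. g i = j}"
proof -
  have "{w \<in> fg_V {0..<n}. fg_E {0..<n} (KE n) g (Inr j) w}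
      = Inr ` ({0..<n} - {j}) \<union> Inl ` {i\<in>{0..<n}. g i = j}" (is "?L = ?R")
  proof (rule set_eqI)
    fix w show "w \<in> ?L \<longleftrightarrow> w \<in> ?R" using assms by (cases w) (auto simp: fg_V_def KE_def)
  qed
  moreover have "card (Inr ` ({0..<n} - {j}) \<union> Inl ` {i\<in>{0..<n}. g i = j})
     = (n - 1) + card {i\<in>{0..<n}. g i = j}"
    by (subst card_Un_disjoint) (use assms in \<open>auto simp: card_image\<close>)
  ultimately show ?thesis by simp
qed


lemma fgV_Inl[simp]: "Inl k \<in> fg_V V \<longleftrightarrow> k \<in> V" by (auto simp: fg_V_def)
lemma fgV_Inr[simp]: "Inr k \<in> fg_V V \<longleftrightarrow> k \<in> V" by (auto simp: fg_V_def)

lemma fgV_cases: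
  assumes "x \<in> fg_V {0..<n}"
  obtains m where "m < n" "x = Inl m" | m where "m < n" "x = Inr m"
  using assms by (cases x) auto

lemma Kn_conn: assumes "1 \<le> n" shows "connected_graph {0..<n} (KE n)"
  unfolding connected_graph_def graph_def
proof (intro conjI ballI)
  fix u v assume "u \<in> {0..<n}" "v \<in> {0..<n}"
  then show "(KE n)\<^sup>*\<^sup>* u v"
    by (cases "u = v") (auto simp: KE_def intro: r_into_rtranclp)
qed (use assms in \<open>auto simp: KE_def\<close>)

lemma Dist_Kn: assumes "1 \<le> n" shows "Dist {0..<n} (KE n) = n"
proof (rule Dist_eqI)
  show "\<exists>c. (\<forall>v\<in>{0..<n}. c v \<in> {1..n}) \<and> distinguishing {0..<n} (KE n) c"
    by (rule exI[of _ "\<lambda>v. v + 1"]) (auto simp: distinguishing_def)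
  fix t c assume "t < n" "\<forall>v\<in>{0..<n}. c v \<in> {1..t}"
  then show "\<not> distinguishing {0..<n} (KE n) c"
    by (intro twin_not_dist[where S = "{0..<n}"]) (auto simp: KE_def)
qed

lemma aut_facts:
  assumes "automorphism V E \<sigma>"
  shows "\<And>x. x \<in> V \<Longrightarrow> \<sigma> x \<in> V" "inj_on \<sigma> V"
    "\<And>x y. x \<in> V \<Longrightarrow> y \<in> V \<Longrightarrow> E (\<sigma> x) (\<sigma> y) = E x y"
  using assms unfolding automorphism_def bij_betw_def by auto

lemma Dist_F_const:
  assumes n: "2 \<le> n"
  shows "Dist (fg_V {0..<n}) (fg_E {0..<n} (KE n) (\<lambda>i. 0)) = n"
proof (rule Dist_eqI)
  define FV where "FV = fg_V {0..<n::nat}"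
  define FE where "FE = fg_E {0..<n} (KE n) (\<lambda>i. 0::nat)"
  define D where "D x = card {w \<in> FV. FE x w}" for x
  have DL: "D (Inl i) = n" if "i < n" for i
    unfolding D_def FV_def FE_def using that by (intro deg_Inl) auto
  have DR: "D (Inr j) = (if j = 0 then n + (n - 1) else n - 1)" if "j < n" for j
  proof -
    have "D (Inr j) = (n - 1) + card {i\<in>{0..<n}. (0::nat) = j}"
      unfolding D_def FV_def FE_def using that by (rule deg_Inr)
    moreover have "{i\<in>{0..<n}. (0::nat) = j} = (if j = 0 then {0..<n} else {})" by auto
    ultimately show ?thesis by simp
  qed
  define c where "c = case_sum (\<lambda>i::nat. i + 1) (\<lambda>i. i + 1)"
  have "distinguishing FV FE c"
    unfolding distinguishing_def
  proof (intro allI impI)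
    fix \<sigma> assume a: "automorphism FV FE \<sigma> \<and> (\<forall>v\<in>FV. c (\<sigma> v) = c v)"
    then have aut: "automorphism FV FE \<sigma>" and col: "\<forall>v\<in>FV. c (\<sigma> v) = c v" by auto
    have Dp: "D (\<sigma> x) = D x" if "x \<in> FV" for x
      unfolding D_def using aut_deg[OF aut that] .
    note af = aut_facts[OF aut]
    show "\<forall>v\<in>FV. \<sigma> v = v"
    proof
      fix x assume x: "x \<in> FV"
      then have sx: "\<sigma> x \<in> FV" by (rule af(1))
      from x obtain i where i: "i < n" "x = Inl i \<or> x = Inr i"
        unfolding FV_def by (metis fgV_cases)
      from sx obtain m where m: "m < n" "\<sigma> x = Inl m \<or> \<sigma> x = Inr m"
        unfolding FV_def by (metis fgV_cases)
      have cm: "m = i" using col x i m by (auto simp: c_def)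
      show "\<sigma> x = x"
        using i m cm Dp[OF x] DL DR n by (auto split: if_splits)
    qed
  qed
  then show "\<exists>c. (\<forall>v\<in>fg_V {0..<n}. c v \<in> {1..n}) \<and> distinguishing (fg_V {0..<n}) (fg_E {0..<n} (KE n) (\<lambda>i. 0)) c"
    unfolding FV_def FE_def
    by (intro exI[of _ c]) (auto simp: c_def fg_V_def)
next
  fix t c assume t: "t < n" and c: "\<forall>v\<in>fg_V {0..<n}. c v \<in> {1..t}"
  show "\<not> distinguishing (fg_V {0..<n}) (fg_E {0..<n} (KE n) (\<lambda>i. 0)) c"
  proof (rule twin_not_dist[where S = "Inl ` {0..<n}"])
    show "\<forall>x y. fg_E {0..<n} (KE n) (\<lambda>i. 0) x y \<longrightarrow> fg_E {0..<n} (KE n) (\<lambda>i. 0) y x"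
      using fg_sym by blast
    show "\<forall>x. \<not> fg_E {0..<n} (KE n) (\<lambda>i. 0) x x" using fg_irr by blast
    show "Inl ` {0..<n} \<subseteq> fg_V {0..<n}" by (auto simp: fg_V_def)
    show "finite (Inl ` {0..<n::nat})" by simp
    show "t < card (Inl ` {0..<n::nat})" using t by (simp add: card_image)
    show "\<forall>v\<in>fg_V {0..<n}. c v \<in> {1..t}" by fact
    show "\<forall>u\<in>Inl ` {0..<n}. \<forall>v\<in>Inl ` {0..<n}. u \<noteq> v \<longrightarrow> (\<forall>w\<in>fg_V {0..<n}.
        w \<noteq> u \<longrightarrow> w \<noteq> v \<longrightarrow> fg_E {0..<n} (KE n) (\<lambda>i. 0) u w = fg_E {0..<n} (KE n) (\<lambda>i. 0) v w)"
    proof (intro ballI impI)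
      fix u v w assume "u \<in> Inl ` {0..<n}" "v \<in> Inl ` {0..<n}" "u \<noteq> v" "w \<in> fg_V {0..<n}" "w \<noteq> u" "w \<noteq> v"
      then show "fg_E {0..<n} (KE n) (\<lambda>i. 0) u w = fg_E {0..<n} (KE n) (\<lambda>i. 0) v w"
        by (cases w) (auto simp: KE_def)
    qed
  qed
qed


definition g1 :: "nat \<Rightarrow> nat" where "g1 i = (if i = 0 then 1 else 0)"

lemma Dist_F_odd:
  assumes n: "3 \<le> n"
  shows "Dist (fg_V {0..<n}) (fg_E {0..<n} (KE n) g1) = n - 1"
proof (rule Dist_eqI)
  define FV where "FV = fg_V {0..<n::nat}"
  define FE where "FE = fg_E {0..<n} (KE n) g1"
  define D where "D x = card {w \<in> FV. FE x w}" for x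
  have DL: "D (Inl i) = n" if "i < n" for i
    unfolding D_def FV_def FE_def using that n by (intro deg_Inl) (auto simp: g1_def)
  have DR: "D (Inr j) = (if j = 0 then n + n - 2 else if j = 1 then n else n - 1)" if "j < n" for j
  proof -
    have "D (Inr j) = (n - 1) + card {i\<in>{0..<n}. g1 i = j}"
      unfolding D_def FV_def FE_def using that by (rule deg_Inr)
    moreover have "{i\<in>{0..<n}. g1 i = j} = (if j = 0 then {1..<n} else if j = 1 then {0} else {})"
      using n by (auto simp: g1_def)
    moreover have "card (if j = 0 then {1..<n} else if j = 1 then {0} else {}) =
        (if j = 0 then n - 1 else if j = 1 then 1 else (0::nat))" by simp
    ultimately show ?thesis using n by (simp split: if_splits)
  qed
  define c where "c = case_sum (\<lambda>i::nat. if i = 0 then 1 else i) (\<lambda>i. if i = 0 then 1 else i)"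
  have "distinguishing FV FE c"
    unfolding distinguishing_def
  proof (intro allI impI)
    fix \<sigma> assume a: "automorphism FV FE \<sigma> \<and> (\<forall>v\<in>FV. c (\<sigma> v) = c v)"
    then have aut: "automorphism FV FE \<sigma>" and col: "\<forall>v\<in>FV. c (\<sigma> v) = c v" by auto
    have Dp: "D (\<sigma> x) = D x" if "x \<in> FV" for x
      unfolding D_def using aut_deg[OF aut that] .
    note af = aut_facts[OF aut]
    have img: "\<exists>m<n. \<sigma> x = Inl m \<or> \<sigma> x = Inr m" if "x \<in> FV" for x
    proof -
      have "\<sigma> x \<in> FV" using af(1) that .
      then show ?thesis unfolding FV_def by (metis fgV_cases)
    qed
    have inFV: "Inl i \<in> FV" "Inr i \<in> FV" if "i < n" for i
      using that by (auto simp: FV_def)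
    have cval: "c (\<sigma> x) = (if m = 0 then 1 else m)" if "\<sigma> x = Inl m \<or> \<sigma> x = Inr m" for x m
      using that by (auto simp: c_def)
    have cvx: "c y = (if k = 0 then 1 else k)" if "y = Inl k \<or> y = Inr k" for y k
      using that by (auto simp: c_def)
    have big: "\<sigma> x = x" if x: "x = Inl k \<or> x = Inr k" "2 \<le> k" "k < n" for x k
    proof -
      have xF: "x \<in> FV" using x inFV by auto
      obtain m where m: "m < n" "\<sigma> x = Inl m \<or> \<sigma> x = Inr m" using img[OF xF] by blast
      have "(if m = 0 then 1 else m) = (if k = 0 then 1 else k)"
        using col xF cval[OF m(2)] cvx[OF x(1)] by simp
      then have mk: "m = k" using x(2) by (cases "m = 0") auto
      have dd: "D (\<sigma> x) = D x" using Dp[OF xF] .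
      show ?thesis
      proof (cases "x = Inl k")
        case True
        then have "D x = n" using DL x(3) by simp
        moreover have "\<sigma> x = Inr k \<Longrightarrow> D (\<sigma> x) = n - 1" using DR[OF x(3)] x(2) by simp
        ultimately show ?thesis using m(2) mk dd True n by auto
      next
        case False
        then have xr: "x = Inr k" using x(1) by simp
        then have "D x = n - 1" using DR[OF x(3)] x(2) by simp
        moreover have "\<sigma> x = Inl k \<Longrightarrow> D (\<sigma> x) = n" using DL x(3) by simp
        ultimately show ?thesis using m(2) mk dd xr n by auto
      qed
    qed
    have one: "\<sigma> x = Inl 0 \<or> \<sigma> x = Inl 1 \<or> \<sigma> x = Inr 0 \<or> \<sigma> x = Inr 1"
      if "x = Inl 0 \<or> x = Inl 1 \<or> x = Inr 0 \<or> x = Inr 1" for x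
    proof -
      have xF: "x \<in> FV" using that inFV n by auto
      obtain m where m: "m < n" "\<sigma> x = Inl m \<or> \<sigma> x = Inr m" using img[OF xF] by blast
      have "c x = 1" using that by (auto simp: c_def)
      then have "(if m = 0 then 1 else m) = (1::nat)" using col xF cval[OF m(2)] by simp
      then have "m = 0 \<or> m = 1" by (cases "m = 0") auto
      then show ?thesis using m(2) by auto
    qed
    have F0: "Inr 0 \<in> FV" "Inr 1 \<in> FV" "Inl 0 \<in> FV" "Inl 1 \<in> FV" "Inl 2 \<in> FV"
      using inFV n by auto
    have Dv: "D (Inl 0) = n" "D (Inl 1) = n" "D (Inr 1) = n" "D (Inr 0) = n + n - 2"
      using DL[of 0] DL[of 1] DR[of 1] DR[of 0] n by auto
    have nn: "n + n - 2 \<noteq> n" using n by simp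
    have r0: "\<sigma> (Inr 0) = Inr 0"
    proof -
      have d: "D (\<sigma> (Inr 0)) = n + n - 2" using Dp[OF F0(1)] Dv(4) by simp
      have o: "\<sigma> (Inr 0) = Inl 0 \<or> \<sigma> (Inr 0) = Inl 1 \<or> \<sigma> (Inr 0) = Inr 0 \<or> \<sigma> (Inr 0) = Inr 1"
        using one[of "Inr 0"] by simp
      show ?thesis using o d Dv nn by metis
    qed
    have l2: "\<sigma> (Inl 2) = Inl 2" using big[of "Inl 2" 2] n by simp
    have E02: "FE (Inl 0) (Inl 2)" "FE (Inl 1) (Inl 2)" "\<not> FE (Inr 1) (Inl 2)"
      "FE (Inl 1) (Inr 0)" "\<not> FE (Inl 0) (Inr 0)"
      using n by (auto simp: FE_def KE_def g1_def)
    have r1: "\<sigma> (Inr 1) = Inr 1"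
    proof -
      have d: "D (\<sigma> (Inr 1)) = n" using Dp[OF F0(2)] Dv(3) by simp
      have e: "\<not> FE (\<sigma> (Inr 1)) (Inl 2)"
        using af(3)[OF F0(2) F0(5)] l2 E02(3) by simp
      have o: "\<sigma> (Inr 1) = Inl 0 \<or> \<sigma> (Inr 1) = Inl 1 \<or> \<sigma> (Inr 1) = Inr 0 \<or> \<sigma> (Inr 1) = Inr 1"
        using one[of "Inr 1"] by simp
      show ?thesis using o d e E02(1,2) Dv(4) nn by metis
    qed
    have injs: "\<sigma> a = \<sigma> b \<Longrightarrow> a \<in> FV \<Longrightarrow> b \<in> FV \<Longrightarrow> a = b" for a b
      using af(2) unfolding inj_on_def by blast
    have l1: "\<sigma> (Inl 1) = Inl 1"
    proof -
      have e: "FE (\<sigma> (Inl 1)) (Inr 0)"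
        using af(3)[OF F0(4) F0(1)] r0 E02(4) by simp
      have ne: "\<sigma> (Inl 1) \<noteq> Inr 1" using injs[of "Inl 1" "Inr 1"] r1 F0 by auto
      have ne0: "\<sigma> (Inl 1) \<noteq> Inr 0" using injs[of "Inl 1" "Inr 0"] r0 F0 by auto
      have o: "\<sigma> (Inl 1) = Inl 0 \<or> \<sigma> (Inl 1) = Inl 1 \<or> \<sigma> (Inl 1) = Inr 0 \<or> \<sigma> (Inl 1) = Inr 1"
        using one[of "Inl 1"] by simp
      show ?thesis using o e ne ne0 E02(5) by metis
    qed
    have l0: "\<sigma> (Inl 0) = Inl 0"
    proof -
      have a1: "\<sigma> (Inl 0) \<noteq> Inr 1" using injs[of "Inl 0" "Inr 1"] r1 F0 by auto
      have a2: "\<sigma> (Inl 0) \<noteq> Inr 0" using injs[of "Inl 0" "Inr 0"] r0 F0 by auto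
      have a3: "\<sigma> (Inl 0) \<noteq> Inl 1" using injs[of "Inl 0" "Inl 1"] l1 F0 by auto
      have o: "\<sigma> (Inl 0) = Inl 0 \<or> \<sigma> (Inl 0) = Inl 1 \<or> \<sigma> (Inl 0) = Inr 0 \<or> \<sigma> (Inl 0) = Inr 1"
        using one[of "Inl 0"] by simp
      show ?thesis using o a1 a2 a3 by metis
    qed
    show "\<forall>v\<in>FV. \<sigma> v = v"
    proof
      fix x assume x: "x \<in> FV"
      then obtain k where k: "k < n" "x = Inl k \<or> x = Inr k" unfolding FV_def by (metis fgV_cases)
      show "\<sigma> x = x"
      proof (cases "2 \<le> k")
        case True then show ?thesis using big k by blast
      next
        case False then have "k = 0 \<or> k = 1" by auto
        then show ?thesis using k(2) l0 l1 r0 r1 by auto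
      qed
    qed
  qed
  then show "\<exists>c. (\<forall>v\<in>fg_V {0..<n}. c v \<in> {1..n - 1}) \<and> distinguishing (fg_V {0..<n}) (fg_E {0..<n} (KE n) g1) c"
    unfolding FV_def FE_def using n
    by (intro exI[of _ c]) (auto simp: c_def fg_V_def)
next
  fix t c assume t: "t < n - 1" and c: "\<forall>v\<in>fg_V {0..<n}. c v \<in> {1..t}"
  show "\<not> distinguishing (fg_V {0..<n}) (fg_E {0..<n} (KE n) g1) c"
  proof (rule twin_not_dist[where S = "Inl ` {1..<n}"])
    show "\<forall>x y. fg_E {0..<n} (KE n) g1 x y \<longrightarrow> fg_E {0..<n} (KE n) g1 y x"
      using fg_sym by blast
    show "\<forall>x. \<not> fg_E {0..<n} (KE n) g1 x x" using fg_irr by blast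
    show "Inl ` {1..<n} \<subseteq> fg_V {0..<n}" by (auto simp: fg_V_def)
    show "finite (Inl ` {1..<n::nat})" by simp
    show "t < card (Inl ` {1..<n::nat})" using t by (simp add: card_image)
    show "\<forall>v\<in>fg_V {0..<n}. c v \<in> {1..t}" by fact
    show "\<forall>u\<in>Inl ` {1..<n}. \<forall>v\<in>Inl ` {1..<n}. u \<noteq> v \<longrightarrow> (\<forall>w\<in>fg_V {0..<n}.
        w \<noteq> u \<longrightarrow> w \<noteq> v \<longrightarrow> fg_E {0..<n} (KE n) g1 u w = fg_E {0..<n} (KE n) g1 v w)"
    proof (intro ballI impI)
      fix u v w assume "u \<in> Inl ` {1..<n}" "v \<in> Inl ` {1..<n}" "u \<noteq> v" "w \<in> fg_V {0..<n}" "w \<noteq> u" "w \<noteq> v"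
      then show "fg_E {0..<n} (KE n) g1 u w = fg_E {0..<n} (KE n) g1 v w"
        by (cases w) (auto simp: KE_def g1_def)
    qed
  qed
qed

theorem lemma2p7:
  fixes t :: nat
  assumes "4 \<le> t"
  shows "\<exists>(V :: nat set) E g. connected_graph V E \<and> g \<in> V \<rightarrow> V \<and>
           Dist V E + Dist (fg_V V) (fg_E V E g) = t"
proof (cases "even t")
  case True
  define n where "n = t div 2"
  have n: "2 \<le> n" "t = n + n" using assms True by (auto simp: n_def)
  show ?thesis
    by (rule exI[of _ "{0..<n}"], rule exI[of _ "KE n"], rule exI[of _ "\<lambda>i. 0"])
       (use n Kn_conn Dist_Kn Dist_F_const in auto)
next
  case False
  define n where "n = (t + 1) div 2"
  have n: "3 \<le> n" "t = n + (n - 1)" using assms False by (auto simp: n_def elim!: oddE)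
  have g: "g1 \<in> {0..<n} \<rightarrow> {0..<n}" using n by (auto simp: g1_def)
  show ?thesis
    by (rule exI[of _ "{0..<n}"], rule exI[of _ "KE n"], rule exI[of _ g1])
       (use n g Kn_conn[of n] Dist_Kn[of n] Dist_F_odd[of n] in auto)
qed

end
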